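(* Let $d\ge3$ and let $G$ be a $d$-regular graph on $n$ nodes. Then $\mathsf{OPT}(G)>\frac{0.86}{d}-\frac{4}{n}$. Moreover, if $n>40d^9$, then $\mathsf{OPT}(G)>\frac{0.26}{\sqrt d}$.
   Context: For a finite simple undirected graph $G=(V,E)$ with $m=|E|\ge1$ edges, degrees $d_v$, and $a_{u,v}=1$ if $\{u,v\}\in E$ and $0$ otherwise: for $C\subseteq V$, $\mathsf M(C)=\frac{1}{2m}\sum_{u\in C}\sum_{v\in C}\big(a_{u,v}-\frac{d_ud_v}{2m}\big)$ (ordered pairs, including $u=v$). A clustering is a partition $\mathcal S$ of $V$ into nonempty clusters, with $\mathsf M(\mathcal S)=\sum_{C\in\mathcal S}\mathsf M(C)$; $\mathsf{OPT}(G)$ is the maximum of $\mathsf M(\mathcal S)$ over all clusterings. *)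

theory Defs
  imports "HOL-Analysis.Analysis"
begin

definition simple_graph :: "'a set \<Rightarrow> ('a \<Rightarrow> 'a \<Rightarrow> bool) \<Rightarrow> bool" where
  "simple_graph V E \<longleftrightarrow> finite V \<and> (\<forall>u v. E u v \<longrightarrow> u \<in> V \<and> v \<in> V)
     \<and> (\<forall>u v. E u v \<longrightarrow> E v u) \<and> (\<forall>u. \<not> E u u)"

definition adj :: "('a \<Rightarrow> 'a \<Rightarrow> bool) \<Rightarrow> 'a \<Rightarrow> 'a \<Rightarrow> real" where
  "adj E u v = (if E u v then 1 else 0)"

definition degree :: "'a set \<Rightarrow> ('a \<Rightarrow> 'a \<Rightarrow> bool) \<Rightarrow> 'a \<Rightarrow> nat" where
  "degree V E v = card {u \<in> V. E v u}"

definition num_edges :: "'a set \<Rightarrow> ('a \<Rightarrow> 'a \<Rightarrow> bool) \<Rightarrow> nat" where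
  "num_edges V E = card {{u, v} | u v. u \<in> V \<and> v \<in> V \<and> E u v}"

definition regular :: "'a set \<Rightarrow> ('a \<Rightarrow> 'a \<Rightarrow> bool) \<Rightarrow> nat \<Rightarrow> bool" where
  "regular V E d \<longleftrightarrow> (\<forall>v \<in> V. degree V E v = d)"

text \<open>Modularity of a single cluster C (ordered pairs, including u = v).\<close>
definition cluster_modularity :: "'a set \<Rightarrow> ('a \<Rightarrow> 'a \<Rightarrow> bool) \<Rightarrow> 'a set \<Rightarrow> real" where
  "cluster_modularity V E C =
     (let m = real (num_edges V E) in
      (1 / (2 * m)) * (\<Sum>u\<in>C. \<Sum>v\<in>C. adj E u v - real (degree V E u) * real (degree V E v) / (2 * m)))"

definition is_clustering :: "'a set \<Rightarrow> 'a set set \<Rightarrow> bool" where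
  "is_clustering V S \<longleftrightarrow> \<Union>S = V \<and> {} \<notin> S \<and> (\<forall>A\<in>S. \<forall>B\<in>S. A \<noteq> B \<longrightarrow> A \<inter> B = {})"

definition modularity :: "'a set \<Rightarrow> ('a \<Rightarrow> 'a \<Rightarrow> bool) \<Rightarrow> 'a set set \<Rightarrow> real" where
  "modularity V E S = (\<Sum>C\<in>S. cluster_modularity V E C)"

definition OPT :: "'a set \<Rightarrow> ('a \<Rightarrow> 'a \<Rightarrow> bool) \<Rightarrow> real" where
  "OPT V E = Max (modularity V E ` {S. is_clustering V S})"

end

theory Submission
  imports Defs
begin


lemma absorb: "Suc j * (Suc N choose Suc j) = Suc N * (N choose j)"
  by (rule Suc_times_binomial)

lemma partial_sum:
  fixes d :: nat
  assumes d1: "d \<ge> 1"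
  shows "j \<le> 2*d \<Longrightarrow> (\<Sum>k=0..j. real (2*d choose k) * (real d - real k)) = real d * real ((2*d-1) choose j)"
proof (induction j)
  case 0
  then show ?case by simp
next
  case (Suc j)
  define N where "N = 2*d - 1"
  have N: "2*d = Suc N" using d1 N_def by simp
  have IH: "(\<Sum>k=0..j. real (2*d choose k) * (real d - real k)) = real d * real (N choose j)"
    using Suc N_def by simp
  have p: "real (2*d choose Suc j) = real (N choose j) + real (N choose Suc j)"
    unfolding N by simp
  have a: "real (Suc j) * real (2*d choose Suc j) = real (2*d) * real (N choose j)"
    unfolding N using absorb[of j N] by (metis of_nat_mult)
  have "(\<Sum>k=0..Suc j. real (2*d choose k) * (real d - real k)) =
        real d * real (N choose j) + real (2*d choose Suc j) * (real d - real (Suc j))"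
    using IH by simp
  also have "\<dots> = real d * real (N choose j) + real d * real (2*d choose Suc j) - real (Suc j) * real (2*d choose Suc j)"
    by (simp add: algebra_simps)
  also have "\<dots> = real d * real (N choose Suc j)"
    using p a by (simp add: algebra_simps)
  finally show ?case using N_def by simp
qed

lemma mad:
  fixes d :: nat
  assumes d1: "d \<ge> 1"
  shows "(\<Sum>k=0..2*d. real (2*d choose k) * \<bar>real k - real d\<bar>) = 2 * real d * real ((2*d-1) choose d)"
proof -
  let ?f = "\<lambda>k. real (2*d choose k) * (real d - real k)"
  have split: "{0..2*d} = {0..d} \<union> {d+1..2*d}" by auto
  have dis: "{0..d} \<inter> {d+1..2*d} = {}" by auto
  have s1: "(\<Sum>k=0..d. real (2*d choose k) * \<bar>real k - real d\<bar>) = (\<Sum>k=0..d. ?f k)"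
    by (intro sum.cong) auto
  have s2: "(\<Sum>k=d+1..2*d. real (2*d choose k) * \<bar>real k - real d\<bar>) = - (\<Sum>k=d+1..2*d. ?f k)"
    by (simp add: sum_negf[symmetric]) (intro sum.cong, auto simp: algebra_simps)
  have tot: "(\<Sum>k=0..2*d. ?f k) = (\<Sum>k=0..d. ?f k) + (\<Sum>k=d+1..2*d. ?f k)"
    unfolding split by (rule sum.union_disjoint) (auto)
  have z: "(\<Sum>k=0..2*d. ?f k) = 0" using partial_sum[OF d1, of "2*d"] d1 by simp
  have h: "(\<Sum>k=0..d. ?f k) = real d * real ((2*d-1) choose d)" using partial_sum[OF d1, of d] by simp
  have "(\<Sum>k=0..2*d. real (2*d choose k) * \<bar>real k - real d\<bar>) =
    (\<Sum>k=0..d. real (2*d choose k) * \<bar>real k - real d\<bar>) + (\<Sum>k=d+1..2*d. real (2*d choose k) * \<bar>real k - real d\<bar>)"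
    unfolding split by (rule sum.union_disjoint) auto
  then show ?thesis using s1 s2 tot z h by linarith
qed

lemma e_rec:
  fixes d :: nat
  assumes d1: "d \<ge> 1"
  shows "real (Suc d) * real ((2*Suc d - 1) choose Suc d) = 2 * (2 * real d + 1) * real ((2*d-1) choose d)"
proof -
  obtain d' where dd: "d = Suc d'" using d1 by (metis Suc_le_D One_nat_def)
  define N where "N = 2*d - 1"
  have N: "2*d = Suc N" using d1 N_def by simp
  have e1: "(2*Suc d - 1) = Suc (2*d)" by simp
  have A: "Suc d * (Suc (2*d) choose Suc d) = Suc (2*d) * (2*d choose d)" by (rule Suc_times_binomial)
  have B0: "(Suc N choose Suc d') = (N choose d') + (N choose Suc d')" by (rule binomial_Suc_Suc)
  have B1: "(2*d choose d) = (N choose d') + (N choose d)" using B0 unfolding N dd[symmetric] by simp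
  have N2: "N = d' + d" using N_def dd by simp
  have B2: "(N choose d') = (N choose d)"
    using binomial_symmetric[of d' N] N2 by simp
  have B: "(2*d choose d) = 2 * (N choose d)" using B1 B2 by simp
  have "Suc d * (Suc (2*d) choose Suc d) = Suc (2*d) * (2 * (N choose d))" using A B by simp
  then have "real (Suc d) * real (Suc (2*d) choose Suc d) = real (Suc (2*d)) * (2 * real (N choose d))"
    by (metis of_nat_mult of_nat_numeral)
  then show ?thesis unfolding e1 N_def by (simp add: algebra_simps)
qed

lemma Gbound:
  fixes d :: nat
  shows "d \<ge> 3 \<Longrightarrow> 4 * real d * (real ((2*d-1) choose d))^2 \<ge> (75/256) * 16^d"
proof (induction d rule: dec_induct)
  case base
  have "((2*3-1) choose 3) = (10::nat)" by (simp add: numeral_eq_Suc)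
  then show ?case by simp
next
  case (step d)
  define x where "x = real ((2*d-1) choose d)"
  define y where "y = real ((2*Suc d-1) choose Suc d)"
  have rec: "real (Suc d) * y = 2 * (2 * real d + 1) * x" using e_rec[of d] step(1) unfolding x_def y_def by simp
  define a where "a = 2 * real d + 1"
  define s where "s = real (Suc d)"
  have s0: "s > 0" unfolding s_def by simp
  have rec': "s * y = 2 * a * x" using rec unfolding a_def s_def .
  have ge: "4 * real d * s \<le> a * a" unfolding a_def s_def by (simp add: algebra_simps)
  have "(4 * s * y^2) * s = 4 * (s * y) * (s * y)" by (simp add: power2_eq_square algebra_simps)
  also have "\<dots> = 16 * (a * a) * (x * x)" unfolding rec' by (simp add: algebra_simps)
  finally have e1: "(4 * s * y^2) * s = 16 * (a * a) * (x * x)" .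
  have "16 * (4 * real d * s) * (x * x) \<le> 16 * (a * a) * (x * x)"
    using ge by (intro mult_right_mono mult_left_mono) auto
  then have "(16 * (4 * real d * x^2)) * s \<le> (4 * s * y^2) * s"
    using e1 by (simp add: power2_eq_square algebra_simps)
  then have "16 * (4 * real d * x^2) \<le> 4 * s * y^2" using s0 by simp
  moreover have "16 * (4 * real d * x^2) \<ge> 16 * ((75/256) * 16^d)" using step(3) unfolding x_def by simp
  ultimately have "4 * s * y^2 \<ge> 16 * ((75/256) * 16^d)" by linarith
  then show ?case unfolding y_def s_def by simp
qed

lemma Dbound:
  fixes d :: nat
  assumes "d \<ge> 3"
  shows "2 * real d * real ((2*d-1) choose d) / 4^d \<ge> (27/50) * sqrt (real d)"
proof -
  define e where "e = real ((2*d-1) choose d)"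
  define q where "q = (4::real)^d"
  have q0: "q > 0" unfolding q_def by simp
  have qq: "q * q = 16^d" unfolding q_def by (simp add: power_mult_distrib[symmetric])
  define D where "D = 2 * real d * e / q"
  have D0: "D \<ge> 0" unfolding D_def e_def using q0 by simp
  have "D * D = (2 * real d * e) * (2 * real d * e) / (q * q)" unfolding D_def by simp
  also have "\<dots> = real d * (4 * real d * e^2) / 16^d" unfolding qq by (simp add: power2_eq_square algebra_simps)
  finally have DD: "D * D = real d * (4 * real d * e^2) / 16^d" .
  have "real d * (4 * real d * e^2) / 16^d \<ge> real d * ((75/256) * 16^d) / 16^d"
    using Gbound[OF assms] unfolding e_def by (intro divide_right_mono mult_left_mono) auto
  moreover have "real d * ((75/256) * 16^d) / (16::real)^d = (75/256) * real d" by simp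
  ultimately have "D * D \<ge> (75/256) * real d" using DD by linarith
  moreover have "((27/50) * sqrt (real d))^2 = (729/2500) * real d"
  proof -
    have "((27/50) * sqrt (real d))^2 = (27/50)^2 * (sqrt (real d))^2" by (rule power_mult_distrib)
    also have "\<dots> = (729/2500) * real d" by (simp add: power2_eq_square)
    finally show ?thesis .
  qed
  ultimately have "((27/50) * sqrt (real d))^2 \<le> D^2" unfolding power2_eq_square[of D] by linarith
  then have "(27/50) * sqrt (real d) \<le> D" using D0 by (rule power2_le_imp_le)
  then show ?thesis unfolding D_def e_def q_def .
qed



locale RG =
  fixes V :: "'a set" and E :: "'a \<Rightarrow> 'a \<Rightarrow> bool" and d n :: nat
  assumes sg: "simple_graph V E" and reg: "regular V E d" and ne: "V \<noteq> {}"
    and d3: "d \<ge> 3" and cardV: "card V = n"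
begin

definition Nb where "Nb u = {w\<in>V. E u w}"

lemma finV: "finite V" using sg by (simp add: simple_graph_def)
lemma symE: "E u v \<Longrightarrow> E v u" using sg by (simp add: simple_graph_def)
lemma irr: "\<not> E u u" using sg by (simp add: simple_graph_def)
lemma inV: "E u v \<Longrightarrow> u \<in> V \<and> v \<in> V" using sg by (simp add: simple_graph_def)
lemma finNb: "finite (Nb u)" using finV by (simp add: Nb_def)
lemma card_Nb: "u \<in> V \<Longrightarrow> card (Nb u) = d"
  using reg by (simp add: regular_def degree_def Nb_def)
lemma deg: "u \<in> V \<Longrightarrow> degree V E u = d"
  using reg by (simp add: regular_def)
lemma n_pos: "n > 0" using finV ne cardV by auto
lemma d_pos: "d > 0" using d3 by simp
lemma Nb_sub: "Nb u \<subseteq> V" by (auto simp: Nb_def)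
lemma u_notin_Nb: "u \<notin> Nb u" using irr by (simp add: Nb_def)

lemma sum_adj: "(\<Sum>v\<in>V. adj E u v) = real (card (Nb u))"
proof -
  have "(\<Sum>v\<in>V. adj E u v) = (\<Sum>v\<in>V. if v \<in> Nb u then 1 else 0)"
    by (rule sum.cong) (auto simp: adj_def Nb_def)
  also have "\<dots> = real (card (Nb u))"
    using finV Nb_sub by (simp add: sum.If_cases Int_absorb1)
  finally show ?thesis .
qed

lemma sum_adj_d: "u \<in> V \<Longrightarrow> (\<Sum>v\<in>V. adj E u v) = real d"
  using sum_adj card_Nb by simp

lemma adj_sym: "adj E u v = adj E v u" using symE by (auto simp: adj_def)

lemma handshake: "2 * num_edges V E = d * n"
proof -
  define P where "P = Sigma V Nb"
  define Ed where "Ed = {{u, v} | u v. u \<in> V \<and> v \<in> V \<and> E u v}"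
  define g where "g = (\<lambda>(u::'a,v::'a). {u,v})"
  have finP: "finite P" unfolding P_def using finV finNb by auto
  have cP: "card P = d * n"
    unfolding P_def using finV finNb card_Nb cardV by (simp add: card_SigmaI)
  have gP: "g ` P \<subseteq> Ed" unfolding P_def Ed_def g_def Nb_def by auto
  have finEd: "finite Ed"
  proof -
    have "Ed \<subseteq> Pow V" unfolding Ed_def by auto
    then show ?thesis using finV finite_subset by blast
  qed
  have "real (card P) = (\<Sum>p\<in>P. 1)" by simp
  also have "\<dots> = (\<Sum>e\<in>Ed. \<Sum>p\<in>{p\<in>P. g p = e}. 1)"
    using sum.group[OF finP finEd gP, of "\<lambda>_. (1::real)"] by simp
  also have "\<dots> = (\<Sum>e\<in>Ed. 2)"
  proof (rule sum.cong)
    fix e assume "e \<in> Ed"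
    then obtain a b where e: "e = {a,b}" "a \<in> V" "b \<in> V" "E a b" unfolding Ed_def by auto
    have ab: "a \<noteq> b" using e irr by auto
    have "{p\<in>P. g p = e} = {(a,b),(b,a)}"
      using e symE unfolding P_def g_def Nb_def by (auto simp: doubleton_eq_iff)
    then show "(\<Sum>p\<in>{p\<in>P. g p = e}. 1::real) = 2" using ab by simp
  qed simp
  finally have "real (card P) = 2 * real (card Ed)" by simp
  then show ?thesis using cP unfolding num_edges_def Ed_def by linarith
qed

lemma m_real: "real (num_edges V E) = real d * real n / 2"
  using handshake by (metis (mono_tags, opaque_lifting) nonzero_mult_div_cancel_left of_nat_mult of_nat_numeral zero_neq_numeral)

lemma cm_formula:
  assumes "C \<subseteq> V"
  shows "cluster_modularity V E C = (\<Sum>u\<in>C. \<Sum>v\<in>C. adj E u v - real d / real n) / (real d * real n)"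
proof -
  have dn: "real d * real n > 0" using d_pos n_pos by simp
  have "cluster_modularity V E C = (1 / (real d * real n)) * (\<Sum>u\<in>C. \<Sum>v\<in>C. adj E u v - real d * real d / (real d * real n))"
    unfolding cluster_modularity_def Let_def m_real
    using assms deg d_pos by (intro arg_cong2[where f="(*)"] sum.cong) (auto simp: subsetD)
  also have "\<dots> = (\<Sum>u\<in>C. \<Sum>v\<in>C. adj E u v - real d / real n) / (real d * real n)"
    using d_pos by simp
  finally show ?thesis .
qed

lemma OPT_ge:
  assumes "is_clustering V S"
  shows "modularity V E S \<le> OPT V E"
proof -
  have "{S. is_clustering V S} \<subseteq> Pow (Pow V)" by (auto simp: is_clustering_def)
  then have "finite {S. is_clustering V S}" using finV by (meson finite_Pow_iff finite_subset)
  then show ?thesis unfolding OPT_def using assms by simp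
qed

end


context RG begin

definition st :: "'a \<times> 'a set \<Rightarrow> 'a set" where "st p = insert (fst p) (snd p)"
definition okp :: "'a \<times> 'a set \<Rightarrow> bool" where
  "okp p \<longleftrightarrow> fst p \<in> V \<and> snd p \<subseteq> V \<and> fst p \<notin> snd p \<and> snd p \<noteq> {} \<and> card (snd p) \<le> 3
     \<and> (\<forall>x\<in>snd p. E (fst p) x)"
definition validS :: "('a \<times> 'a set) set \<Rightarrow> bool" where
  "validS S \<longleftrightarrow> (\<forall>p\<in>S. okp p) \<and> (\<forall>p\<in>S. \<forall>q\<in>S. p \<noteq> q \<longrightarrow> st p \<inter> st q = {})"
definition cov :: "('a \<times> 'a set) set \<Rightarrow> 'a set" where "cov S = (\<Union>p\<in>S. st p)"

lemma validS_sub: "validS S \<Longrightarrow> S \<subseteq> V \<times> Pow V"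
proof
  fix p assume "validS S" "p \<in> S"
  then have "okp p" by (simp add: validS_def)
  then show "p \<in> V \<times> Pow V" by (cases p) (auto simp: okp_def)
qed

lemma validS_fin: "validS S \<Longrightarrow> finite S"
  by (rule finite_subset[OF validS_sub]) (simp_all add: finV finite_SigmaI)

lemma vdisj: "validS S \<Longrightarrow> p \<in> S \<Longrightarrow> q \<in> S \<Longrightarrow> p \<noteq> q \<Longrightarrow> st p \<inter> st q = {}"
  unfolding validS_def by blast
lemma vok: "validS S \<Longrightarrow> p \<in> S \<Longrightarrow> okp p"
  unfolding validS_def by blast

lemma cov_sub: "validS S \<Longrightarrow> cov S \<subseteq> V"
  using validS_sub unfolding cov_def st_def by fastforce

lemma fin_cov: "validS S \<Longrightarrow> finite (cov S)"
  using cov_sub finV finite_subset by blast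

lemma improve:
  assumes v: "validS S" and R: "R \<subseteq> S" and okQ: "\<forall>q\<in>Q. okp q"
    and dQ: "\<forall>q\<in>Q. \<forall>q'\<in>Q. q \<noteq> q' \<longrightarrow> st q \<inter> st q' = {}"
    and U1: "(\<Union>q\<in>Q. st q) \<subseteq> (\<Union>r\<in>R. st r) \<union> Wn" and Wn: "Wn \<inter> cov S = {}"
    and U2: "(\<Union>r\<in>R. st r) \<union> {w} \<subseteq> (\<Union>q\<in>Q. st q)"
    and w: "w \<in> V" "w \<notin> cov S"
  shows "validS (Q \<union> (S - R)) \<and> card (cov S) < card (cov (Q \<union> (S - R)))"
proof
  show v': "validS (Q \<union> (S - R))"
    unfolding validS_def
  proof (intro conjI ballI impI)
    fix p assume "p \<in> Q \<union> (S - R)" then show "okp p" using okQ vok[OF v] by blast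
  next
    fix p q assume p: "p \<in> Q \<union> (S - R)" and q: "q \<in> Q \<union> (S - R)" and pq: "p \<noteq> q"
    have key: "st a \<inter> st b = {}" if a: "a \<in> Q" and b: "b \<in> S - R" for a b
    proof -
      have "st a \<subseteq> (\<Union>r\<in>R. st r) \<union> Wn" using U1 a by blast
      moreover have "st b \<inter> st r = {}" if "r \<in> R" for r
      proof -
        have "b \<noteq> r" using b that by blast
        then show ?thesis using vdisj[OF v, of b r] b that R by blast
      qed
      moreover have "Wn \<inter> st b = {}" using Wn b unfolding cov_def by blast
      ultimately show ?thesis by blast
    qed
    show "st p \<inter> st q = {}"
    proof (cases "p \<in> Q")
      case True
      then show ?thesis
      proof (cases "q \<in> Q")
        case True
        then show ?thesis using \<open>p \<in> Q\<close> dQ pq by blast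
      next
        case False
        then show ?thesis using \<open>p \<in> Q\<close> q key by blast
      qed
    next
      case False
      then have pS: "p \<in> S - R" using p by blast
      show ?thesis
      proof (cases "q \<in> Q")
        case True
        then show ?thesis using pS key[of q p] by blast
      next
        case False
        then have "q \<in> S" using q by blast
        then show ?thesis using pS pq vdisj[OF v] by blast
      qed
    qed
  qed
  have h1: "cov S \<union> {w} \<subseteq> cov (Q \<union> (S - R))"
    using U2 R unfolding cov_def by blast
  have h2: "finite (cov (Q \<union> (S - R)))" using fin_cov v' by blast
  have "cov S \<subset> cov (Q \<union> (S - R))" using h1 w by blast
  then show "card (cov S) < card (cov (Q \<union> (S - R)))" using h2 by (simp add: psubset_card_mono)
qed

lemma exists_max:
  obtains S where "validS S" "\<And>S'. validS S' \<Longrightarrow> card (cov S') \<le> card (cov S)"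
proof -
  let ?A = "{S. validS S}"
  have "?A \<subseteq> Pow (V \<times> Pow V)" using validS_sub by auto
  then have fA: "finite ?A" by (rule finite_subset) (simp add: finV finite_SigmaI)
  have "validS {}" by (simp add: validS_def)
  then have neA: "?A \<noteq> {}" by blast
  let ?M = "Max ((\<lambda>S. card (cov S)) ` ?A)"
  have "?M \<in> (\<lambda>S. card (cov S)) ` ?A" using fA neA by simp
  then obtain S where "validS S" "card (cov S) = ?M" by auto
  moreover have "card (cov S') \<le> ?M" if "validS S'" for S' using fA that by simp
  ultimately show ?thesis using that by metis
qed


lemma nbr_center:
  assumes v: "validS S" and mx: "\<And>S'. validS S' \<Longrightarrow> card (cov S') \<le> card (cov S)"
    and w: "w \<in> V" "w \<notin> cov S" and wx: "E w x"
  shows "\<exists>L. (x, L) \<in> S \<and> card L = 3"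
proof (rule ccontr)
  assume nc: "\<not> ?thesis"
  have xV: "x \<in> V" using inV wx by blast
  have wnx: "w \<noteq> x" using wx irr by blast
  show False
  proof (cases "x \<in> cov S")
    case False
    have "validS ({(w,{x})} \<union> (S - {})) \<and> card (cov S) < card (cov ({(w,{x})} \<union> (S - {})))"
      apply (rule improve[OF v, where Wn="{w,x}" and w=w])
      using w xV wnx wx False by (auto simp: okp_def st_def)
    then show False using mx by (meson leD)
  next
    case True
    then obtain p where pS: "p \<in> S" and xp: "x \<in> st p" unfolding cov_def by blast
    obtain c L where p: "p = (c, L)" by fastforce
    have okp: "okp p" using vok[OF v pS] .
    have cV: "c \<in> V" and LV: "L \<subseteq> V" and cL: "c \<notin> L" and Lne: "L \<noteq> {}" and L3: "card L \<le> 3"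
      and Ec: "\<forall>y\<in>L. E c y" using okp p by (auto simp: okp_def)
    have finL: "finite L" using LV finV finite_subset by blast
    have stp: "st p = insert c L" using p by (simp add: st_def)
    have wstp: "w \<notin> insert c L" using w pS stp unfolding cov_def by blast
    show False
    proof (cases "x = c")
      case True
      then have "card L \<noteq> 3" using nc pS p by blast
      then have cl: "card L \<le> 2" using L3 by simp
      have "validS ({(c, insert w L)} \<union> (S - {p})) \<and> card (cov S) < card (cov ({(c, insert w L)} \<union> (S - {p})))"
      proof (rule improve[OF v, where Wn="{w}" and w=w])
        show "\<forall>q\<in>{(c, insert w L)}. okp q"
          using cV LV w cL wstp Lne finL cl Ec symE[OF wx] True by (auto simp: okp_def)
      qed (use pS w wstp stp in \<open>auto simp: st_def\<close>)
      then show False using mx by (meson leD)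
    next
      case False
      then have xL: "x \<in> L" using xp stp by blast
      show False
      proof (cases "card L \<ge> 2")
        case True
        have Lx: "L - {x} \<noteq> {}"
        proof
          assume "L - {x} = {}"
          then have "L \<subseteq> {x}" by blast
          then have "card L \<le> 1" using card_mono[of "{x}" L] by simp
          then show False using True by simp
        qed
        have cLx: "card (L - {x}) \<le> 3" using L3 finL by (meson card_Diff1_le le_trans)
        have "validS ({(c, L - {x}), (x, {w})} \<union> (S - {p})) \<and> card (cov S) < card (cov ({(c, L - {x}), (x, {w})} \<union> (S - {p})))"
        proof (rule improve[OF v, where Wn="{w}" and w=w])
          show "\<forall>q\<in>{(c, L - {x}), (x, {w})}. okp q"
            using cV LV w cL wstp Lx cLx Ec symE[OF wx] xV wnx by (auto simp: okp_def)
          show "\<forall>q\<in>{(c, L - {x}), (x, {w})}. \<forall>q'\<in>{(c, L - {x}), (x, {w})}. q \<noteq> q' \<longrightarrow> st q \<inter> st q' = {}"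
            using False wstp by (auto simp: st_def)
        qed (use pS w wstp stp xL in \<open>auto simp: st_def\<close>)
        then show False using mx by (meson leD)
      next
        case False
        moreover have "card L > 0" using Lne finL by (simp add: card_gt_0_iff)
        ultimately have "card L = 1" by linarith
        then have Lx: "L = {x}" using xL by (metis card_1_singletonE singletonD)
        have "validS ({(x, {c, w})} \<union> (S - {p})) \<and> card (cov S) < card (cov ({(x, {c, w})} \<union> (S - {p})))"
        proof (rule improve[OF v, where Wn="{w}" and w=w])
          show "\<forall>q\<in>{(x, {c, w})}. okp q"
            using cV w wstp Ec symE[OF wx] xV wnx Lx cL symE by (auto simp: okp_def card_insert_if)
        qed (use pS w wstp stp Lx in \<open>auto simp: st_def\<close>)
        then show False using mx by (meson leD)
      qed
    qed
  qed
qed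


lemma card_st: "okp p \<Longrightarrow> card (st p) = card (snd p) + 1"
proof -
  assume "okp p"
  then have "finite (snd p)" "fst p \<notin> snd p" using finV finite_subset by (auto simp: okp_def)
  then show ?thesis by (simp add: st_def)
qed

lemma card_cov: "validS S \<Longrightarrow> card (cov S) = (\<Sum>p\<in>S. card (snd p) + 1)"
proof -
  assume v: "validS S"
  have "card (cov S) = (\<Sum>p\<in>S. card (st p))" unfolding cov_def
  proof (rule card_UN_disjoint)
    show "finite S" using validS_fin v .
    show "\<forall>i\<in>S. finite (st i)"
    proof
      fix i assume "i \<in> S"
      then have "snd i \<subseteq> V" using vok[OF v] by (simp add: okp_def)
      then show "finite (st i)" using finV finite_subset by (auto simp: st_def)
    qed
    show "\<forall>i\<in>S. \<forall>j\<in>S. i \<noteq> j \<longrightarrow> st i \<inter> st j = {}" using vdisj[OF v] by blast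
  qed
  also have "\<dots> = (\<Sum>p\<in>S. card (snd p) + 1)" using card_st vok[OF v] by (intro sum.cong) auto
  finally show ?thesis .
qed

lemma count_main:
  assumes v: "validS S" and mx: "\<And>S'. validS S' \<Longrightarrow> card (cov S') \<le> card (cov S)"
  shows "n \<le> 2 * (\<Sum>p\<in>S. card (snd p))"
proof -
  define W where "W = V - cov S"
  define K3 where "K3 = {p\<in>S. card (snd p) = 3}"
  have finS: "finite S" using validS_fin v .
  have finW: "finite W" using finV W_def by simp
  have nW: "n = card (cov S) + card W"
    using cov_sub[OF v] finV cardV unfolding W_def
    by (metis card_Diff_subset fin_cov[OF v] le_add_diff_inverse card_mono)
  have A: "(\<Sum>w\<in>W. card (Nb w)) = d * card W"
    using card_Nb W_def by simp
  have B: "(\<Sum>w\<in>W. card (Nb w)) = (\<Sum>c\<in>V. card {w\<in>W. E w c})"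
  proof -
    have "(\<Sum>w\<in>W. card (Nb w)) = (\<Sum>w\<in>W. \<Sum>c\<in>V. if E w c then 1 else 0)"
      using finV by (intro sum.cong) (auto simp: Nb_def sum.If_cases Int_def)
    also have "\<dots> = (\<Sum>c\<in>V. \<Sum>w\<in>W. if E w c then 1 else 0)" by (rule sum.swap)
    also have "\<dots> = (\<Sum>c\<in>V. card {w\<in>W. E w c})"
      using finW by (intro sum.cong) (auto simp: sum.If_cases Int_def)
    finally show ?thesis .
  qed
  have C: "(\<Sum>c\<in>V. card {w\<in>W. E w c}) = (\<Sum>c\<in>fst ` K3. card {w\<in>W. E w c})"
  proof (rule sym, rule sum.mono_neutral_left)
    show "finite V" by (rule finV)
    show "fst ` K3 \<subseteq> V" using vok[OF v] K3_def by (auto simp: okp_def)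
    show "\<forall>i\<in>V - fst ` K3. card {w \<in> W. E w i} = 0"
    proof
      fix c assume c: "c \<in> V - fst ` K3"
      have "{w \<in> W. E w c} = {}"
      proof (rule ccontr)
        assume "{w \<in> W. E w c} \<noteq> {}"
        then obtain w where "w \<in> W" "E w c" by blast
        then obtain L where "(c, L) \<in> S" "card L = 3"
          using nbr_center[OF v mx] W_def by blast
        then have "c \<in> fst ` K3" unfolding K3_def by force
        then show False using c by blast
      qed
      then show "card {w \<in> W. E w c} = 0" by (simp only: card.empty)
    qed
  qed
  have D: "card {w\<in>W. E w c} \<le> d - 3" if c: "c \<in> fst ` K3" for c
  proof -
    obtain L where cL: "(c, L) \<in> S" "card L = 3" using c K3_def by force
    have ok: "okp (c, L)" using vok[OF v cL(1)] .
    have LN: "L \<subseteq> Nb c" using ok by (auto simp: okp_def Nb_def)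
    have cV: "c \<in> V" using ok by (simp add: okp_def)
    have "L \<subseteq> cov S" using cL(1) unfolding cov_def st_def by force
    then have "{w\<in>W. E w c} \<subseteq> Nb c - L" using W_def symE by (auto simp: Nb_def)
    then have "card {w\<in>W. E w c} \<le> card (Nb c - L)" using finNb by (simp add: card_mono)
    also have "\<dots> = d - 3" using card_Diff_subset[OF _ LN] finNb LN cL(2) card_Nb[OF cV]
      by (metis finite_subset)
    finally show ?thesis .
  qed
  have "(\<Sum>c\<in>fst ` K3. card {w\<in>W. E w c}) \<le> (\<Sum>c\<in>fst ` K3. d - 3)"
    by (rule sum_mono) (rule D)
  then have "d * card W \<le> (\<Sum>c\<in>fst ` K3. d - 3)" using A B C by linarith
  also have "\<dots> = card (fst ` K3) * (d - 3)" by simp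
  also have "\<dots> \<le> card K3 * (d - 3)"
    using finS K3_def by (simp add: card_image_le)
  also have "\<dots> \<le> card K3 * d" by simp
  finally have "d * card W \<le> d * card K3" by (simp add: mult.commute)
  then have WK: "card W \<le> card K3" using d_pos by simp
  have E: "(\<Sum>p\<in>S. 2 * card (snd p)) \<ge> (\<Sum>p\<in>S. (card (snd p) + 1) + (if card (snd p) = 3 then 2 else 0))"
  proof (rule sum_mono)
    fix p assume "p \<in> S"
    then have ok: "okp p" using vok[OF v] by blast
    then have "card (snd p) > 0" using finV finite_subset by (auto simp: okp_def card_gt_0_iff)
    then show "card (snd p) + 1 + (if card (snd p) = 3 then 2 else 0) \<le> 2 * card (snd p)" by auto
  qed
  have F: "(\<Sum>p\<in>S. (if card (snd p) = 3 then 2 else 0::nat)) = 2 * card K3"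
    using finS unfolding K3_def by (simp add: sum.If_cases Int_def)
  have G: "(\<Sum>p\<in>S. (card (snd p) + 1) + (if card (snd p) = 3 then 2 else 0)) =
      (\<Sum>p\<in>S. card (snd p) + 1) + (\<Sum>p\<in>S. (if card (snd p) = 3 then 2 else 0::nat))"
    by (rule sum.distrib)
  have H: "(\<Sum>p\<in>S. 2 * card (snd p)) = 2 * (\<Sum>p\<in>S. card (snd p))"
    by (rule sum_distrib_left[symmetric])
  have "2 * (\<Sum>p\<in>S. card (snd p)) \<ge> card (cov S) + 2 * card K3"
    using E F G H card_cov[OF v] by linarith
  then show ?thesis using nW WK by linarith
qed


end


context RG begin
lemma cm2:
  assumes "C \<subseteq> V"
  shows "cluster_modularity V E C = (\<Sum>u\<in>C. \<Sum>v\<in>C. adj E u v) / (real d * real n) - (real (card C))^2 / (real n)^2"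
proof -
  have "(\<Sum>u\<in>C. \<Sum>v\<in>C. adj E u v - real d / real n) = (\<Sum>u\<in>C. \<Sum>v\<in>C. adj E u v) - real (card C) * real (card C) * (real d / real n)"
    by (simp add: sum_subtractf)
  moreover have "(real (card C) * real (card C) * (real d / real n)) / (real d * real n) = (real (card C))^2 / (real n)^2"
    using d_pos n_pos by (simp add: power2_eq_square)
  ultimately show ?thesis using cm_formula[OF assms] by (simp add: diff_divide_distrib)
qed

lemma star_adj:
  assumes ok: "okp p"
  shows "(\<Sum>u\<in>st p. \<Sum>v\<in>st p. adj E u v) \<ge> 2 * real (card (snd p))"
proof -
  obtain c L where p: "p = (c, L)" by fastforce
  have LV: "L \<subseteq> V" and cL: "c \<notin> L" and Ec: "\<forall>y\<in>L. E c y" using ok p by (auto simp: okp_def)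
  have finL: "finite L" using LV finV finite_subset by blast
  have st: "st p = insert c L" using p by (simp add: st_def)
  have nn: "adj E u v \<ge> 0" for u v by (simp add: adj_def)
  have r1: "(\<Sum>v\<in>insert c L. adj E c v) = real (card L)"
  proof -
    have "(\<Sum>v\<in>insert c L. adj E c v) = adj E c c + (\<Sum>v\<in>L. adj E c v)" using finL cL by simp
    also have "\<dots> = (\<Sum>v\<in>L. 1)" using irr Ec by (simp add: adj_def)
    finally show ?thesis by simp
  qed
  have r2: "(\<Sum>v\<in>insert c L. adj E u v) \<ge> 1" if "u \<in> L" for u
  proof -
    have "(\<Sum>v\<in>insert c L. adj E u v) \<ge> adj E u c"
      using finL nn by (intro member_le_sum) auto
    moreover have "adj E u c = 1" using Ec that symE by (simp add: adj_def)
    ultimately show ?thesis by simp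
  qed
  have "(\<Sum>u\<in>insert c L. \<Sum>v\<in>insert c L. adj E u v) = real (card L) + (\<Sum>u\<in>L. \<Sum>v\<in>insert c L. adj E u v)"
    using finL cL r1 by simp
  moreover have "(\<Sum>u\<in>L. \<Sum>v\<in>insert c L. adj E u v) \<ge> (\<Sum>u\<in>L. 1)"
    using r2 by (rule sum_mono)
  ultimately show ?thesis using st p by simp
qed

lemma part1: "OPT V E \<ge> 1 / real d - 4 / real n"
proof -
  obtain S where v: "validS S" and mx: "\<And>S'. validS S' \<Longrightarrow> card (cov S') \<le> card (cov S)"
    using exists_max by blast
  define W where "W = V - cov S"
  define CL where "CL = st ` S \<union> (\<lambda>w. {w}) ` W"
  have finS: "finite S" using validS_fin v .
  have finW: "finite W" using finV W_def by simp
  have stne: "st p \<noteq> {}" for p by (simp add: st_def)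
  have stV: "st p \<subseteq> V" if "p \<in> S" for p using vok[OF v that] by (auto simp: okp_def st_def)
  have stcov: "st p \<subseteq> cov S" if "p \<in> S" for p using that unfolding cov_def by blast
  have clus: "is_clustering V CL"
    unfolding is_clustering_def
  proof (intro conjI ballI impI)
    have "\<Union>CL = cov S \<union> W" unfolding CL_def cov_def by auto
    then show "\<Union>CL = V" unfolding W_def using cov_sub[OF v] by blast
    show "{} \<notin> CL" unfolding CL_def using stne by blast
    fix A B assume A: "A \<in> CL" and B: "B \<in> CL" and AB: "A \<noteq> B"
    show "A \<inter> B = {}"
    proof (cases "A \<in> st ` S")
      case True
      then obtain p where p: "p \<in> S" "A = st p" by blast
      show ?thesis
      proof (cases "B \<in> st ` S")
        case True
        then obtain q where q: "q \<in> S" "B = st q" by blast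
        then show ?thesis using vdisj[OF v p(1) q(1)] AB p by blast
      next
        case False
        then obtain w where "w \<in> W" "B = {w}" using B CL_def by blast
        then show ?thesis using stcov[OF p(1)] p W_def by blast
      qed
    next
      case False
      then obtain w where w: "w \<in> W" "A = {w}" using A CL_def by blast
      show ?thesis
      proof (cases "B \<in> st ` S")
        case True
        then obtain q where q: "q \<in> S" "B = st q" by blast
        then show ?thesis using stcov[OF q(1)] w W_def by blast
      next
        case False
        then obtain w' where "w' \<in> W" "B = {w'}" using B CL_def by blast
        then show ?thesis using w AB by blast
      qed
    qed
  qed
  have injst: "inj_on st S"
  proof
    fix p q assume "p \<in> S" "q \<in> S" "st p = st q"
    then show "p = q" using vdisj[OF v] stne by blast
  qed
  have dis: "st ` S \<inter> (\<lambda>w. {w}) ` W = {}"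
  proof -
    have "st p \<noteq> {w}" if "p \<in> S" "w \<in> W" for p w
      using stcov[OF that(1)] that(2) W_def stne by blast
    then show ?thesis by blast
  qed
  have modeq: "modularity V E CL = (\<Sum>p\<in>S. cluster_modularity V E (st p)) + (\<Sum>w\<in>W. cluster_modularity V E {w})"
  proof -
    have "modularity V E CL = (\<Sum>C\<in>st ` S. cluster_modularity V E C) + (\<Sum>C\<in>(\<lambda>w. {w}) ` W. cluster_modularity V E C)"
      unfolding modularity_def CL_def using finS finW dis by (simp add: sum.union_disjoint)
    also have "\<dots> = (\<Sum>p\<in>S. cluster_modularity V E (st p)) + (\<Sum>w\<in>W. cluster_modularity V E {w})"
      using injst by (simp add: sum.reindex inj_on_def)
    finally show ?thesis .
  qed
  have dn: "real d * real n > 0" using d_pos n_pos by simp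
  have n0: "real n > 0" using n_pos by simp
  have b1: "cluster_modularity V E (st p) \<ge> 2 * real (card (snd p)) / (real d * real n) - 4 * (real (card (snd p)) + 1) / (real n)^2"
    if p: "p \<in> S" for p
  proof -
    have ok: "okp p" using vok[OF v p] .
    have cs: "card (st p) = card (snd p) + 1" using card_st[OF ok] .
    have l3: "real (card (snd p)) \<le> 3" using ok by (simp add: okp_def)
    have "(real (card (st p)))^2 \<le> 4 * (real (card (snd p)) + 1)"
    proof -
      have "(real (card (snd p)) + 1) * (real (card (snd p)) + 1) \<le> 4 * (real (card (snd p)) + 1)"
        using l3 by (intro mult_right_mono) auto
      moreover have "real (card (st p)) = real (card (snd p)) + 1" using cs by simp
      ultimately show ?thesis by (simp only: power2_eq_square)
    qed
    then have t2: "(real (card (st p)))^2 / (real n)^2 \<le> 4 * (real (card (snd p)) + 1) / (real n)^2"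
      using n0 by (simp add: divide_right_mono)
    have t1: "(\<Sum>u\<in>st p. \<Sum>v\<in>st p. adj E u v) / (real d * real n) \<ge> 2 * real (card (snd p)) / (real d * real n)"
      using star_adj[OF ok] dn by (simp add: divide_right_mono)
    show ?thesis using cm2[OF stV[OF p]] t1 t2 by linarith
  qed
  have b2: "cluster_modularity V E {w} = - 1 / (real n)^2" if "w \<in> W" for w
  proof -
    have "w \<in> V" using that W_def by simp
    then have "cluster_modularity V E {w} = adj E w w / (real d * real n) - 1 / (real n)^2" using cm2[of "{w}"] by simp
    then show ?thesis using irr by (simp add: adj_def)
  qed
  have cnt: "real n \<le> 2 * (\<Sum>p\<in>S. real (card (snd p)))"
    using count_main[OF v mx] by (metis of_nat_le_iff of_nat_mult of_nat_numeral of_nat_sum)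
  have ncount: "real n = (\<Sum>p\<in>S. real (card (snd p)) + 1) + real (card W)"
  proof -
    have "n = card (cov S) + card W"
      using cov_sub[OF v] finV cardV unfolding W_def
      by (metis card_Diff_subset fin_cov[OF v] le_add_diff_inverse card_mono)
    then show ?thesis using card_cov[OF v] by (simp add: add.commute)
  qed
  define X where "X = (\<Sum>p\<in>S. 2 * real (card (snd p)) / (real d * real n) - 4 * (real (card (snd p)) + 1) / (real n)^2)
        + (\<Sum>w\<in>W. - 4 / (real n)^2)"
  have m1: "modularity V E CL \<ge> X"
  proof -
    have "(\<Sum>w\<in>W. - 4 / (real n)^2) \<le> (\<Sum>w\<in>W. cluster_modularity V E {w})"
      using b2 n0 by (intro sum_mono) (simp add: divide_right_mono)
    moreover have "(\<Sum>p\<in>S. 2 * real (card (snd p)) / (real d * real n) - 4 * (real (card (snd p)) + 1) / (real n)^2)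
        \<le> (\<Sum>p\<in>S. cluster_modularity V E (st p))"
      using b1 by (rule sum_mono)
    ultimately show ?thesis using modeq X_def by linarith
  qed
  have m2: "X = (2 / (real d * real n)) * (\<Sum>p\<in>S. real (card (snd p))) - (4 / (real n)^2) * ((\<Sum>p\<in>S. real (card (snd p)) + 1) + real (card W))"
    unfolding X_def by (simp add: sum_subtractf sum_distrib_left algebra_simps sum_divide_distrib[symmetric])
  have m3: "(4 / (real n)^2) * ((\<Sum>p\<in>S. real (card (snd p)) + 1) + real (card W)) = 4 / real n"
    unfolding ncount[symmetric] using n0 by (simp add: power2_eq_square)
  have m4: "(2 / (real d * real n)) * (\<Sum>p\<in>S. real (card (snd p))) \<ge> 1 / real d"
  proof -
    have "(2 / (real d * real n)) * (real n / 2) \<le> (2 / (real d * real n)) * (\<Sum>p\<in>S. real (card (snd p)))"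
      using cnt dn by (intro mult_left_mono) auto
    moreover have "(2 / (real d * real n)) * (real n / 2) = 1 / real d" using n0 by simp
    ultimately show ?thesis by linarith
  qed
  have "modularity V E CL \<ge> 1 / real d - 4 / real n" using m1 m2 m3 m4 by linarith
  then show ?thesis using OPT_ge[OF clus] by linarith
qed

end


context RG begin

definition Om :: "('a \<times> bool) set" where "Om = V \<times> UNIV"
definition xi :: "('a \<times> bool) set \<Rightarrow> 'a \<Rightarrow> real" where
  "xi X u = (if (u,True) \<in> X then 1 else 0) + (if (u,False) \<in> X then 1 else 0) - 1"
definition inI :: "('a \<times> bool) set \<Rightarrow> 'a \<Rightarrow> bool" where
  "inI X u \<longleftrightarrow> ((u,True) \<in> X) \<noteq> ((u,False) \<in> X)"
definition T :: "('a \<times> bool) set \<Rightarrow> 'a \<Rightarrow> real" where "T X u = (\<Sum>w\<in>Nb u. xi X w)"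
definition sg :: "real \<Rightarrow> bool \<Rightarrow> real" where
  "sg t b = (if t > 0 then 1 else if t < 0 then -1 else if b then 1 else -1)"
definition y :: "('a \<times> bool) set \<Rightarrow> 'a \<Rightarrow> real" where
  "y X u = (if inI X u then sg (T X u) ((u,True) \<in> X) else xi X u)"
definition flip :: "('a \<times> bool) set \<Rightarrow> ('a \<times> bool) set \<Rightarrow> ('a \<times> bool) set" where
  "flip F X = (X - F) \<union> (F - X)"

lemma finOm: "finite Om" unfolding Om_def using finV by simp
lemma cardOm: "card Om = 2 * n" unfolding Om_def using finV cardV by (simp add: card_cartesian_product)

lemma flip_flip: "flip F (flip F X) = X" unfolding flip_def by blast
lemma flip_sub: "F \<subseteq> Om \<Longrightarrow> X \<subseteq> Om \<Longrightarrow> flip F X \<subseteq> Om" unfolding flip_def by blast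

lemma sum_flip:
  assumes "F \<subseteq> Om"
  shows "(\<Sum>X\<in>Pow Om. g (flip F X)) = (\<Sum>X\<in>Pow Om. g X)"
  by (rule sum.reindex_bij_witness[of _ "flip F" "flip F"])
     (use assms flip_sub in \<open>auto simp: flip_flip\<close>)

lemma sum_neg_zero:
  assumes "F \<subseteq> Om" and "\<And>X. g (flip F X) = - g X"
  shows "(\<Sum>X\<in>Pow Om. g X) = (0::real)"
proof -
  have "(\<Sum>X\<in>Pow Om. g X) = (\<Sum>X\<in>Pow Om. g (flip F X))" using sum_flip[OF assms(1), of g] by simp
  also have "\<dots> = - (\<Sum>X\<in>Pow Om. g X)" using assms(2) by (simp add: sum_negf)
  finally show ?thesis by simp
qed

lemma mem_flipV: "(w,b) \<in> flip (W \<times> UNIV) X \<longleftrightarrow> (((w,b) \<in> X) \<noteq> (w \<in> W))"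
  unfolding flip_def by auto

lemma xi_flipV: "xi (flip (W \<times> UNIV) X) w = (if w \<in> W then - xi X w else xi X w)"
  unfolding xi_def mem_flipV by auto

lemma inI_flipV: "inI (flip (W \<times> UNIV) X) w = inI X w"
  unfolding inI_def mem_flipV by auto

lemma T_flip_out: "Nb u \<inter> W = {} \<Longrightarrow> T (flip (W \<times> UNIV) X) u = T X u"
  unfolding T_def by (intro sum.cong) (auto simp: xi_flipV)

lemma T_flip_in: "Nb u \<subseteq> W \<Longrightarrow> T (flip (W \<times> UNIV) X) u = - T X u"
  unfolding T_def by (simp add: sum_negf[symmetric]) (intro sum.cong, auto simp: xi_flipV)

lemma sg_neg: "sg (- t) (\<not> b) = - sg t b" unfolding sg_def by auto

lemma y_flip_in:
  assumes "insert u (Nb u) \<subseteq> W"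
  shows "y (flip (W \<times> UNIV) X) u = - y X u"
proof -
  have u: "u \<in> W" using assms by blast
  have "((u,True) \<in> flip (W \<times> UNIV) X) = (\<not> (u,True) \<in> X)" using u mem_flipV by blast
  then show ?thesis using assms unfolding y_def
    by (simp add: inI_flipV T_flip_in xi_flipV u sg_neg)
qed

lemma y_flip_out:
  assumes "insert u (Nb u) \<inter> W = {}"
  shows "y (flip (W \<times> UNIV) X) u = y X u"
proof -
  have u: "u \<notin> W" using assms by blast
  have "((u,True) \<in> flip (W \<times> UNIV) X) = ((u,True) \<in> X)" using u mem_flipV by blast
  moreover have "Nb u \<inter> W = {}" using assms by blast
  ultimately show ?thesis unfolding y_def
    by (simp add: inI_flipV T_flip_out xi_flipV u)
qed

lemma y_pm: "y X u = 1 \<or> y X u = -1"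
  unfolding y_def sg_def xi_def inI_def by auto

lemma abs_y: "\<bar>y X u\<bar> = 1" using y_pm[of X u] by auto

lemma inI_xi: "inI X u \<longleftrightarrow> xi X u = 0" unfolding inI_def xi_def by auto

lemma Z1:
  assumes "u \<noteq> v" "u \<in> V"
  shows "(\<Sum>X\<in>Pow Om. xi X u * xi X v) = 0"
  by (rule sum_neg_zero[where F="{u} \<times> UNIV"]) (use assms in \<open>auto simp: Om_def xi_flipV\<close>)

lemma Z2:
  assumes "v \<in> V" "insert u (Nb u) \<inter> insert v (Nb v) = {}"
  shows "(\<Sum>X\<in>Pow Om. y X u * y X v) = 0"
proof (rule sum_neg_zero[where F="insert v (Nb v) \<times> UNIV"])
  show "insert v (Nb v) \<times> UNIV \<subseteq> Om" using assms(1) Nb_sub by (auto simp: Om_def)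
  fix X
  show "y (flip (insert v (Nb v) \<times> UNIV) X) u * y (flip (insert v (Nb v) \<times> UNIV) X) v = - (y X u * y X v)"
    using y_flip_in[of v "insert v (Nb v)" X] y_flip_out[of u "insert v (Nb v)" X] assms(2) by simp
qed


lemma xi_flip1: "w \<noteq> u \<Longrightarrow> xi (flip {(u,True)} X) w = xi X w"
  unfolding xi_def flip_def by auto

lemma inI_flip1: "inI (flip {(u,True)} X) u = (\<not> inI X u)"
  unfolding inI_def flip_def by auto

lemma T_flip1: "T (flip {(u,True)} X) u = T X u"
  unfolding T_def
proof (intro sum.cong)
  fix w assume "w \<in> Nb u"
  then have "w \<noteq> u" using u_notin_Nb by blast
  then show "xi (flip {(u, True)} X) w = xi X w" by (rule xi_flip1)
qed simp

lemma half:
  assumes u: "u \<in> V"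
  shows "(\<Sum>X\<in>Pow Om. \<bar>T X u\<bar>) = 2 * (\<Sum>X\<in>Pow Om. if inI X u then \<bar>T X u\<bar> else 0)"
proof -
  have F: "{(u,True)} \<subseteq> Om" using u by (simp add: Om_def)
  have "(\<Sum>X\<in>Pow Om. if inI X u then \<bar>T X u\<bar> else 0) = (\<Sum>X\<in>Pow Om. if inI (flip {(u,True)} X) u then \<bar>T (flip {(u,True)} X) u\<bar> else 0)"
    using sum_flip[OF F, of "\<lambda>X. if inI X u then \<bar>T X u\<bar> else 0"] by simp
  also have "\<dots> = (\<Sum>X\<in>Pow Om. if inI X u then 0 else \<bar>T X u\<bar>)"
    by (intro sum.cong) (auto simp: inI_flip1 T_flip1)
  finally have e: "(\<Sum>X\<in>Pow Om. if inI X u then \<bar>T X u\<bar> else 0) = (\<Sum>X\<in>Pow Om. if inI X u then 0 else \<bar>T X u\<bar>)" .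
  have "(\<Sum>X\<in>Pow Om. \<bar>T X u\<bar>) = (\<Sum>X\<in>Pow Om. (if inI X u then \<bar>T X u\<bar> else 0) + (if inI X u then 0 else \<bar>T X u\<bar>))"
    by (intro sum.cong) auto
  also have "\<dots> = (\<Sum>X\<in>Pow Om. if inI X u then \<bar>T X u\<bar> else 0) + (\<Sum>X\<in>Pow Om. if inI X u then 0 else \<bar>T X u\<bar>)"
    by (rule sum.distrib)
  finally show ?thesis using e by simp
qed

lemma T_card: "u \<in> V \<Longrightarrow> T X u = real (card (X \<inter> (Nb u \<times> UNIV))) - real d"
proof -
  assume u: "u \<in> V"
  have fin: "finite (Nb u \<times> (UNIV::bool set))" using finNb by simp
  have "real (card (X \<inter> (Nb u \<times> UNIV))) = (\<Sum>p\<in>Nb u \<times> UNIV. if p \<in> X then 1 else 0)"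
  proof -
    have "(\<Sum>p\<in>Nb u \<times> UNIV. if p \<in> X then (1::real) else 0) = (\<Sum>p\<in>(Nb u \<times> UNIV) \<inter> X. 1)"
      using fin by (simp add: sum.If_cases)
    then show ?thesis by (simp add: Int_commute)
  qed
  also have "\<dots> = (\<Sum>w\<in>Nb u. \<Sum>b\<in>UNIV. if (w,b) \<in> X then 1 else 0)"
    by (simp add: sum.cartesian_product)
  also have "\<dots> = (\<Sum>w\<in>Nb u. xi X w + 1)"
    by (intro sum.cong) (auto simp: xi_def UNIV_bool)
  also have "\<dots> = T X u + real d" using card_Nb[OF u] by (simp add: T_def sum.distrib)
  finally show ?thesis by simp
qed

lemma sum_restrict:
  assumes P: "P \<subseteq> Om"
  shows "(\<Sum>X\<in>Pow Om. f (X \<inter> P)) = 2 ^ (card Om - card P) * (\<Sum>Y\<in>Pow P. f Y :: real)"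
proof -
  have "(\<Sum>X\<in>Pow Om. f (X \<inter> P)) = (\<Sum>(Y,Z)\<in>Pow P \<times> Pow (Om - P). f Y)"
    by (rule sum.reindex_bij_witness[of _ "\<lambda>(Y,Z). Y \<union> Z" "\<lambda>X. (X \<inter> P, X - P)"])
       (use P in auto)
  also have "\<dots> = (\<Sum>Y\<in>Pow P. \<Sum>Z\<in>Pow (Om - P). f Y)"
    by (rule sum.cartesian_product[symmetric])
  also have "\<dots> = (\<Sum>Y\<in>Pow P. 2 ^ card (Om - P) * f Y)"
    using finOm by (simp add: card_Pow)
  also have "\<dots> = 2 ^ (card Om - card P) * (\<Sum>Y\<in>Pow P. f Y)"
    using P finOm by (simp add: sum_distrib_left card_Diff_subset finite_subset)
  finally show ?thesis .
qed

lemma sum_by_card: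
  assumes P: "finite P"
  shows "(\<Sum>Y\<in>Pow P. g (card Y)) = (\<Sum>k=0..card P. real (card P choose k) * g k)"
proof -
  have "(\<Sum>Y\<in>Pow P. g (card Y)) = (\<Sum>k\<in>{0..card P}. \<Sum>Y\<in>{Y. Y \<in> Pow P \<and> card Y = k}. g (card Y))"
    by (rule sum.group[symmetric]) (use P in \<open>auto simp: card_mono\<close>)
  also have "\<dots> = (\<Sum>k=0..card P. real (card P choose k) * g k)"
  proof (rule sum.cong)
    fix k assume "k \<in> {0..card P}"
    have "(\<Sum>Y\<in>{Y. Y \<in> Pow P \<and> card Y = k}. g (card Y)) = (\<Sum>Y\<in>{Y. Y \<subseteq> P \<and> card Y = k}. g k)"
      by (intro sum.cong) auto
    also have "\<dots> = real (card P choose k) * g k" using n_subsets[OF P, of k] by simp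
    finally show "(\<Sum>Y\<in>{Y. Y \<in> Pow P \<and> card Y = k}. g (card Y)) = real (card P choose k) * g k" .
  qed simp
  finally show ?thesis .
qed

definition DD :: real where "DD = 2 * real d * real ((2*d-1) choose d) / 4^d"

lemma sum_absT:
  assumes u: "u \<in> V"
  shows "(\<Sum>X\<in>Pow Om. \<bar>T X u\<bar>) = 2 ^ card Om * DD"
proof -
  define P where "P = Nb u \<times> (UNIV::bool set)"
  have P: "P \<subseteq> Om" unfolding P_def Om_def using Nb_sub by auto
  have finP: "finite P" unfolding P_def using finNb by simp
  have cP: "card P = 2 * d" unfolding P_def using card_Nb[OF u] finNb by (simp add: card_cartesian_product)
  have cOm: "card Om \<ge> 2 * d" using card_mono[OF finOm P] cP by simp
  have "(\<Sum>X\<in>Pow Om. \<bar>T X u\<bar>) = (\<Sum>X\<in>Pow Om. \<bar>real (card (X \<inter> P)) - real d\<bar>)"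
    using T_card[OF u] P_def by simp
  also have "\<dots> = 2 ^ (card Om - card P) * (\<Sum>Y\<in>Pow P. \<bar>real (card Y) - real d\<bar>)"
    by (rule sum_restrict[OF P, of "\<lambda>Y. \<bar>real (card Y) - real d\<bar>"])
  also have "(\<Sum>Y\<in>Pow P. \<bar>real (card Y) - real d\<bar>) = (\<Sum>k=0..2*d. real (2*d choose k) * \<bar>real k - real d\<bar>)"
    using sum_by_card[OF finP, of "\<lambda>k. \<bar>real k - real d\<bar>"] cP by simp
  also have "\<dots> = 2 * real d * real ((2*d-1) choose d)" using mad d_pos by simp
  also have "(2::real) ^ (card Om - card P) = 2 ^ card Om / 4 ^ d"
  proof -
    have "(2::real) ^ card Om = 2 ^ (card Om - card P) * 2 ^ (2*d)"
      using cOm cP by (simp add: power_add[symmetric])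
    moreover have "(2::real) ^ (2*d) = 4 ^ d" by (simp add: power_mult)
    ultimately show ?thesis by simp
  qed
  finally show ?thesis unfolding DD_def by simp
qed


lemma flip_comm: "flip F (flip G X) = flip G (flip F X)" unfolding flip_def by blast

lemma sgS:
  fixes a c :: real
  shows "(c > 0 \<longrightarrow> sg (a + c) b + sg (- a + c) (\<not> b) \<ge> 0) \<and>
         (c < 0 \<longrightarrow> sg (a + c) b + sg (- a + c) (\<not> b) \<le> 0) \<and>
         (c = 0 \<longrightarrow> sg (a + c) b + sg (- a + c) (\<not> b) = 0)"
  unfolding sg_def by auto

lemma sg_prod:
  fixes a b' c :: real
  shows "(sg (a + c) b + sg (- a + c) (\<not> b)) * (sg (b' + c) e + sg (- b' + c) (\<not> e)) \<ge> 0"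
proof -
  consider "c > 0" | "c < 0" | "c = 0" by linarith
  then show ?thesis
  proof cases
    case 1 then show ?thesis using sgS[of c a b] sgS[of c b' e] by simp
  next
    case 2 then show ?thesis using sgS[of c a b] sgS[of c b' e] by (simp add: mult_nonpos_nonpos)
  next
    case 3 then show ?thesis using sgS[of c a b] by simp
  qed
qed

lemma side1:
  assumes uv: "E u v" and Zv: "inI Z v"
  shows "T Z u = (\<Sum>w\<in>Nb u - Nb v - {v}. xi Z w) + (\<Sum>w\<in>Nb u \<inter> Nb v. xi Z w)"
proof -
  have vN: "v \<in> Nb u" using uv inV by (simp add: Nb_def)
  have eq: "Nb u = insert v ((Nb u - Nb v - {v}) \<union> (Nb u \<inter> Nb v))" using vN by blast
  have vn: "v \<notin> (Nb u - Nb v - {v}) \<union> (Nb u \<inter> Nb v)" using u_notin_Nb[of v] by blast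
  have fin1: "finite (Nb u - Nb v - {v})" "finite (Nb u \<inter> Nb v)" using finNb by auto
  have "T Z u = xi Z v + (\<Sum>w\<in>(Nb u - Nb v - {v}) \<union> (Nb u \<inter> Nb v). xi Z w)"
    unfolding T_def by (subst eq, subst sum.insert) (use fin1 vn in auto)
  also have "\<dots> = (\<Sum>w\<in>Nb u - Nb v - {v}. xi Z w) + (\<Sum>w\<in>Nb u \<inter> Nb v. xi Z w)"
    using Zv inI_xi fin1 by (subst sum.union_disjoint) auto
  finally show ?thesis .
qed

lemma side2:
  assumes uv: "E u v" and Xu: "inI X u" and Xv: "inI X v"
  defines "A' \<equiv> insert u (Nb u - Nb v - {v})"
  shows "y X u + y (flip (A' \<times> UNIV) X) u =
    sg ((\<Sum>w\<in>Nb u - Nb v - {v}. xi X w) + (\<Sum>w\<in>Nb u \<inter> Nb v. xi X w)) ((u,True) \<in> X)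
    + sg (- (\<Sum>w\<in>Nb u - Nb v - {v}. xi X w) + (\<Sum>w\<in>Nb u \<inter> Nb v. xi X w)) (\<not> (u,True) \<in> X)"
proof -
  let ?Y = "flip (A' \<times> UNIV) X"
  have uA: "u \<in> A'" unfolding A'_def by simp
  have b: "((u,True) \<in> ?Y) = (\<not> (u,True) \<in> X)" using uA mem_flipV by blast
  have Yu: "inI ?Y u" and Yv: "inI ?Y v" using Xu Xv inI_flipV by auto
  have s1: "(\<Sum>w\<in>Nb u - Nb v - {v}. xi ?Y w) = - (\<Sum>w\<in>Nb u - Nb v - {v}. xi X w)"
    by (simp add: sum_negf[symmetric]) (intro sum.cong, auto simp: xi_flipV A'_def)
  have s2: "(\<Sum>w\<in>Nb u \<inter> Nb v. xi ?Y w) = (\<Sum>w\<in>Nb u \<inter> Nb v. xi X w)"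
    using u_notin_Nb[of u] by (intro sum.cong) (auto simp: xi_flipV A'_def)
  show ?thesis
    unfolding y_def using Xu Yu side1[OF uv Xv] side1[OF uv Yv] s1 s2 b by simp
qed

lemma side3:
  assumes uv: "E u v" and Zv: "inI Z v"
  defines "B' \<equiv> insert v (Nb v - Nb u - {u})"
  shows "y (flip (B' \<times> UNIV) Z) u = y Z u"
proof -
  let ?Y = "flip (B' \<times> UNIV) Z"
  have uB: "u \<notin> B'" unfolding B'_def using uv irr by auto
  have b: "((u,True) \<in> ?Y) = ((u,True) \<in> Z)" using uB mem_flipV by blast
  have Yv: "inI ?Y v" using Zv inI_flipV by auto
  have s1: "(\<Sum>w\<in>Nb u - Nb v - {v}. xi ?Y w) = (\<Sum>w\<in>Nb u - Nb v - {v}. xi Z w)"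
    by (intro sum.cong) (auto simp: xi_flipV B'_def)
  have s2: "(\<Sum>w\<in>Nb u \<inter> Nb v. xi ?Y w) = (\<Sum>w\<in>Nb u \<inter> Nb v. xi Z w)"
    using u_notin_Nb[of v] by (intro sum.cong) (auto simp: xi_flipV B'_def)
  have "T ?Y u = T Z u" using side1[OF uv Zv] side1[OF uv Yv] s1 s2 by simp
  moreover have "xi ?Y u = xi Z u" using uB xi_flipV by simp
  ultimately show ?thesis unfolding y_def using b inI_flipV by simp
qed


lemma F4:
  assumes uv: "E u v"
  shows "(\<Sum>X\<in>Pow Om. if inI X u \<and> inI X v then y X u * y X v else 0) \<ge> 0"
proof -
  define A' where "A' = insert u (Nb u - Nb v - {v})"
  define B' where "B' = insert v (Nb v - Nb u - {u})"
  define fA where "fA = flip (A' \<times> UNIV)"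
  define fB where "fB = flip (B' \<times> UNIV)"
  define h where "h = (\<lambda>X. if inI X u \<and> inI X v then y X u * y X v else 0)"
  have vu: "E v u" using symE uv by blast
  have uV: "u \<in> V" and vV: "v \<in> V" using inV uv by auto
  have AO: "A' \<times> UNIV \<subseteq> Om" unfolding A'_def Om_def using uV Nb_sub by auto
  have BO: "B' \<times> UNIV \<subseteq> Om" unfolding B'_def Om_def using vV Nb_sub by auto
  have sA: "(\<Sum>X\<in>Pow Om. h (fA X)) = sum h (Pow Om)" unfolding fA_def by (rule sum_flip[OF AO])
  have sB: "(\<Sum>X\<in>Pow Om. g (fB X)) = sum g (Pow Om)" for g unfolding fB_def by (rule sum_flip[OF BO])
  have sAB: "(\<Sum>X\<in>Pow Om. h (fA (fB X))) = sum h (Pow Om)"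
    using sB[of "\<lambda>X. h (fA X)"] sA by simp
  have pw: "h X + h (fA X) + h (fB X) + h (fA (fB X)) \<ge> 0" for X
  proof (cases "inI X u \<and> inI X v")
    case False
    have "h X = 0" "h (fA X) = 0" "h (fB X) = 0" "h (fA (fB X)) = 0"
      unfolding h_def fA_def fB_def using False by (simp_all only: inI_flipV if_False)
    then show ?thesis by simp
  next
    case True
    then have Xu: "inI X u" and Xv: "inI X v" by auto
    have iA: "inI (fA X) u" "inI (fA X) v" "inI (fB X) u" "inI (fB X) v" "inI (fA (fB X)) u" "inI (fA (fB X)) v"
      using Xu Xv unfolding fA_def fB_def by (simp_all add: inI_flipV)
    have A'': "A' = insert u (Nb u - Nb v - {v})" by (rule A'_def)
    have e1: "y (fA X) v = y X v" using side3[OF vu Xu] unfolding fA_def A'_def by simp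
    have e2: "y (fB X) u = y X u" using side3[OF uv Xv] unfolding fB_def B'_def by simp
    have e3: "y (fA (fB X)) u = y (fA X) u"
    proof -
      have "fA (fB X) = fB (fA X)" unfolding fA_def fB_def by (rule flip_comm)
      then show ?thesis using side3[OF uv iA(2)] unfolding fB_def B'_def by simp
    qed
    have e4: "y (fA (fB X)) v = y (fB X) v" using side3[OF vu iA(3)] unfolding fA_def A'_def by simp
    have "h X + h (fA X) + h (fB X) + h (fA (fB X)) = (y X u + y (fA X) u) * (y X v + y (fB X) v)"
      unfolding h_def using Xu Xv iA e1 e2 e3 e4 by (simp add: algebra_simps)
    also have "\<dots> \<ge> 0"
    proof -
      have q1: "y X u + y (fA X) u =
        sg ((\<Sum>w\<in>Nb u - Nb v - {v}. xi X w) + (\<Sum>w\<in>Nb u \<inter> Nb v. xi X w)) ((u,True) \<in> X)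
        + sg (- (\<Sum>w\<in>Nb u - Nb v - {v}. xi X w) + (\<Sum>w\<in>Nb u \<inter> Nb v. xi X w)) (\<not> (u,True) \<in> X)"
        using side2[OF uv Xu Xv] unfolding fA_def A'_def by simp
      have q2: "y X v + y (fB X) v =
        sg ((\<Sum>w\<in>Nb v - Nb u - {u}. xi X w) + (\<Sum>w\<in>Nb u \<inter> Nb v. xi X w)) ((v,True) \<in> X)
        + sg (- (\<Sum>w\<in>Nb v - Nb u - {u}. xi X w) + (\<Sum>w\<in>Nb u \<inter> Nb v. xi X w)) (\<not> (v,True) \<in> X)"
        using side2[OF vu Xv Xu] unfolding fB_def B'_def by (simp add: Int_commute)
      show ?thesis unfolding q1 q2 by (rule sg_prod)
    qed
    finally show ?thesis .
  qed
  have "4 * sum h (Pow Om) = (\<Sum>X\<in>Pow Om. h X + h (fA X) + h (fB X) + h (fA (fB X)))"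
    using sA sB[of h] sAB by (simp add: sum.distrib)
  also have "\<dots> \<ge> 0" using pw by (simp add: sum_nonneg)
  finally show ?thesis unfolding h_def by simp
qed

end


context RG begin

lemma adj_xi: "(\<Sum>v\<in>V. adj E u v * xi X v) = T X u"
proof -
  have "(\<Sum>v\<in>V. adj E u v * xi X v) = (\<Sum>v\<in>V. if v \<in> Nb u then xi X v else 0)"
    by (intro sum.cong) (auto simp: adj_def Nb_def)
  also have "\<dots> = (\<Sum>v\<in>V \<inter> Nb u. xi X v)" using finV by (simp add: sum.If_cases)
  also have "V \<inter> Nb u = Nb u" using Nb_sub by blast
  finally show ?thesis unfolding T_def .
qed

lemma yT: "inI X u \<Longrightarrow> y X u * T X u = \<bar>T X u\<bar>"
  unfolding y_def sg_def by auto

definition dec where "dec X u v = xi X u * xi X v + (if inI X u then y X u else 0) * xi X v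
   + xi X u * (if inI X v then y X v else 0) + (if inI X u \<and> inI X v then y X u * y X v else 0)"

lemma decomp: "y X u * y X v = dec X u v"
  unfolding dec_def using inI_xi[of X u] inI_xi[of X v] unfolding y_def by auto

lemma row: "(\<Sum>u\<in>V. \<Sum>v\<in>V. adj E u v * ((if inI X u then y X u else 0) * xi X v)) = (\<Sum>u\<in>V. if inI X u then \<bar>T X u\<bar> else 0)"
proof -
  have "(\<Sum>u\<in>V. \<Sum>v\<in>V. adj E u v * ((if inI X u then y X u else 0) * xi X v)) =
        (\<Sum>u\<in>V. (if inI X u then y X u else 0) * (\<Sum>v\<in>V. adj E u v * xi X v))"
    by (simp add: sum_distrib_left algebra_simps)
  also have "\<dots> = (\<Sum>u\<in>V. if inI X u then \<bar>T X u\<bar> else 0)"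
    by (intro sum.cong) (auto simp: adj_xi yT)
  finally show ?thesis .
qed

lemma row2: "(\<Sum>u\<in>V. \<Sum>v\<in>V. adj E u v * (xi X u * (if inI X v then y X v else 0))) = (\<Sum>u\<in>V. if inI X u then \<bar>T X u\<bar> else 0)"
proof -
  have "(\<Sum>u\<in>V. \<Sum>v\<in>V. adj E u v * (xi X u * (if inI X v then y X v else 0))) =
        (\<Sum>v\<in>V. \<Sum>u\<in>V. adj E v u * ((if inI X v then y X v else 0) * xi X u))"
    by (subst sum.swap) (simp add: adj_sym algebra_simps)
  also have "\<dots> = (\<Sum>u\<in>V. if inI X u then \<bar>T X u\<bar> else 0)" by (rule row)
  finally show ?thesis .
qed

lemma sum4: "(\<Sum>u\<in>A. \<Sum>v\<in>A. (g u v::real) * (f1 u v + f2 u v + f3 u v + f4 u v)) =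
  (\<Sum>u\<in>A. \<Sum>v\<in>A. g u v * f1 u v) + (\<Sum>u\<in>A. \<Sum>v\<in>A. g u v * f2 u v)
  + (\<Sum>u\<in>A. \<Sum>v\<in>A. g u v * f3 u v) + (\<Sum>u\<in>A. \<Sum>v\<in>A. g u v * f4 u v)"
  by (simp add: distrib_left sum.distrib)

lemma pointwise:
  "(\<Sum>u\<in>V. \<Sum>v\<in>V. adj E u v * (y X u * y X v)) =
     (\<Sum>u\<in>V. \<Sum>v\<in>V. adj E u v * (xi X u * xi X v))
   + 2 * (\<Sum>u\<in>V. if inI X u then \<bar>T X u\<bar> else 0)
   + (\<Sum>u\<in>V. \<Sum>v\<in>V. adj E u v * (if inI X u \<and> inI X v then y X u * y X v else 0))"
proof -
  have "(\<Sum>u\<in>V. \<Sum>v\<in>V. adj E u v * (y X u * y X v)) =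
     (\<Sum>u\<in>V. \<Sum>v\<in>V. adj E u v * (xi X u * xi X v))
   + (\<Sum>u\<in>V. \<Sum>v\<in>V. adj E u v * ((if inI X u then y X u else 0) * xi X v))
   + (\<Sum>u\<in>V. \<Sum>v\<in>V. adj E u v * (xi X u * (if inI X v then y X v else 0)))
   + (\<Sum>u\<in>V. \<Sum>v\<in>V. adj E u v * (if inI X u \<and> inI X v then y X u * y X v else 0))"
  proof -
    have de: "y X u * y X v = xi X u * xi X v + (if inI X u then y X u else 0) * xi X v
      + xi X u * (if inI X v then y X v else 0) + (if inI X u \<and> inI X v then y X u * y X v else 0)" for u v
      unfolding dec_def[symmetric] by (rule decomp)
    have "(\<Sum>u\<in>V. \<Sum>v\<in>V. adj E u v * (y X u * y X v)) = (\<Sum>u\<in>V. \<Sum>v\<in>V. adj E u v * (xi X u * xi X v + (if inI X u then y X u else 0) * xi X v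
      + xi X u * (if inI X v then y X v else 0) + (if inI X u \<and> inI X v then y X u * y X v else 0)))"
      by (intro sum.cong refl, rule arg_cong[where f="\<lambda>t. adj E _ _ * t"], rule de)
    then show ?thesis by (simp only: distrib_left sum.distrib)
  qed
  then show ?thesis unfolding row row2 by simp
qed

lemma K_def': "card (Pow Om) = 2 ^ card Om" using finOm by (simp add: card_Pow)

lemma adj_part:
  "(\<Sum>X\<in>Pow Om. \<Sum>u\<in>V. \<Sum>v\<in>V. adj E u v * (y X u * y X v)) \<ge> 2 ^ card Om * (real n * DD)"
proof -
  have z: "(\<Sum>X\<in>Pow Om. \<Sum>u\<in>V. \<Sum>v\<in>V. adj E u v * (xi X u * xi X v)) = 0"
  proof -
    have "(\<Sum>X\<in>Pow Om. \<Sum>u\<in>V. \<Sum>v\<in>V. adj E u v * (xi X u * xi X v)) =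
          (\<Sum>u\<in>V. \<Sum>v\<in>V. adj E u v * (\<Sum>X\<in>Pow Om. xi X u * xi X v))"
      by (simp add: sum_distrib_left sum.swap[of _ "Pow Om"])
    also have "\<dots> = 0"
    proof (intro sum.neutral ballI)
      fix u v assume "u \<in> V" "v \<in> V"
      show "adj E u v * (\<Sum>X\<in>Pow Om. xi X u * xi X v) = 0"
      proof (cases "u = v")
        case True then show ?thesis using irr by (simp add: adj_def)
      next
        case False then show ?thesis using Z1[OF False \<open>u \<in> V\<close>] by simp
      qed
    qed
    finally show ?thesis .
  qed
  have f: "(\<Sum>X\<in>Pow Om. \<Sum>u\<in>V. \<Sum>v\<in>V. adj E u v * (if inI X u \<and> inI X v then y X u * y X v else 0)) \<ge> 0"
  proof -
    have "(\<Sum>X\<in>Pow Om. \<Sum>u\<in>V. \<Sum>v\<in>V. adj E u v * (if inI X u \<and> inI X v then y X u * y X v else 0)) =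
          (\<Sum>u\<in>V. \<Sum>v\<in>V. adj E u v * (\<Sum>X\<in>Pow Om. if inI X u \<and> inI X v then y X u * y X v else 0))"
      by (simp add: sum_distrib_left sum.swap[of _ "Pow Om"])
    also have "\<dots> \<ge> 0"
    proof (intro sum_nonneg)
      fix u v assume "u \<in> V" "v \<in> V"
      show "adj E u v * (\<Sum>X\<in>Pow Om. if inI X u \<and> inI X v then y X u * y X v else 0) \<ge> 0"
      proof (cases "E u v")
        case True then show ?thesis using F4[OF True] by (simp add: adj_def)
      next
        case False then show ?thesis by (simp add: adj_def)
      qed
    qed
    finally show ?thesis .
  qed
  have t: "(\<Sum>X\<in>Pow Om. 2 * (\<Sum>u\<in>V. if inI X u then \<bar>T X u\<bar> else 0)) = 2 ^ card Om * (real n * DD)"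
  proof -
    have "(\<Sum>X\<in>Pow Om. 2 * (\<Sum>u\<in>V. if inI X u then \<bar>T X u\<bar> else 0)) =
          (\<Sum>u\<in>V. 2 * (\<Sum>X\<in>Pow Om. if inI X u then \<bar>T X u\<bar> else 0))"
      by (simp add: sum_distrib_left sum.swap[of _ "Pow Om"])
    also have "\<dots> = (\<Sum>u\<in>V. 2 ^ card Om * DD)"
      by (intro sum.cong) (auto simp: half[symmetric] sum_absT)
    also have "\<dots> = 2 ^ card Om * (real n * DD)" using cardV by simp
    finally show ?thesis .
  qed
  have "(\<Sum>X\<in>Pow Om. \<Sum>u\<in>V. \<Sum>v\<in>V. adj E u v * (y X u * y X v)) =
        (\<Sum>X\<in>Pow Om. \<Sum>u\<in>V. \<Sum>v\<in>V. adj E u v * (xi X u * xi X v))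
      + (\<Sum>X\<in>Pow Om. 2 * (\<Sum>u\<in>V. if inI X u then \<bar>T X u\<bar> else 0))
      + (\<Sum>X\<in>Pow Om. \<Sum>u\<in>V. \<Sum>v\<in>V. adj E u v * (if inI X u \<and> inI X v then y X u * y X v else 0))"
    unfolding pointwise by (simp only: sum.distrib)
  then show ?thesis using z f t by linarith
qed

end


context RG begin

lemma R_card:
  assumes u: "u \<in> V"
  shows "card {v\<in>V. insert u (Nb u) \<inter> insert v (Nb v) \<noteq> {}} \<le> d * d + d + 1"
proof -
  have sub: "{v\<in>V. insert u (Nb u) \<inter> insert v (Nb v) \<noteq> {}} \<subseteq> insert u (Nb u \<union> (\<Union>x\<in>Nb u. Nb x))"
  proof
    fix v assume "v \<in> {v\<in>V. insert u (Nb u) \<inter> insert v (Nb v) \<noteq> {}}"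
    then obtain x where v: "v \<in> V" and x1: "x \<in> insert u (Nb u)" and x2: "x \<in> insert v (Nb v)" by blast
    show "v \<in> insert u (Nb u \<union> (\<Union>x\<in>Nb u. Nb x))"
    proof (cases "x = u")
      case True
      then show ?thesis using x2 v symE by (auto simp: Nb_def)
    next
      case False
      then have xN: "x \<in> Nb u" using x1 by blast
      show ?thesis
      proof (cases "x = v")
        case True then show ?thesis using xN by blast
      next
        case False
        then have "E v x" using x2 by (auto simp: Nb_def)
        then have "v \<in> Nb x" using v symE by (auto simp: Nb_def)
        then show ?thesis using xN by blast
      qed
    qed
  qed
  have fin: "finite (insert u (Nb u \<union> (\<Union>x\<in>Nb u. Nb x)))" using finNb by simp
  have "card {v\<in>V. insert u (Nb u) \<inter> insert v (Nb v) \<noteq> {}} \<le> card (insert u (Nb u \<union> (\<Union>x\<in>Nb u. Nb x)))"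
    using card_mono[OF fin sub] .
  also have "\<dots> \<le> Suc (card (Nb u \<union> (\<Union>x\<in>Nb u. Nb x)))" by (rule card_insert_le_m1) simp_all
  also have "card (Nb u \<union> (\<Union>x\<in>Nb u. Nb x)) \<le> card (Nb u) + card (\<Union>x\<in>Nb u. Nb x)" by (rule card_Un_le)
  also have "card (\<Union>x\<in>Nb u. Nb x) \<le> (\<Sum>x\<in>Nb u. card (Nb x))" using finNb by (rule card_UN_le)
  also have "(\<Sum>x\<in>Nb u. card (Nb x)) = (\<Sum>x\<in>Nb u. d)" using Nb_sub card_Nb by (intro sum.cong) auto
  finally show ?thesis using card_Nb[OF u] by simp
qed


lemma yy_le: "(\<Sum>X\<in>Pow Om. y X u * y X v) \<le> 2 ^ card Om"
proof -
  have "(\<Sum>X\<in>Pow Om. y X u * y X v) \<le> (\<Sum>X\<in>Pow Om. 1)"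
  proof (rule sum_mono)
    fix X show "y X u * y X v \<le> 1" using y_pm[of X u] y_pm[of X v] by auto
  qed
  also have "\<dots> = 2 ^ card Om" using K_def' by simp
  finally show ?thesis .
qed

lemma yy_part:
  "(\<Sum>X\<in>Pow Om. \<Sum>u\<in>V. \<Sum>v\<in>V. y X u * y X v) \<le> 2 ^ card Om * (real n * (real d * real d + real d + 1))"
proof -
  have "(\<Sum>X\<in>Pow Om. \<Sum>u\<in>V. \<Sum>v\<in>V. y X u * y X v) = (\<Sum>u\<in>V. \<Sum>v\<in>V. \<Sum>X\<in>Pow Om. y X u * y X v)"
    by (simp add: sum.swap[of _ "Pow Om"])
  also have "\<dots> \<le> (\<Sum>u\<in>V. 2 ^ card Om * (real d * real d + real d + 1))"
  proof (rule sum_mono)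
    fix u assume u: "u \<in> V"
    define R where "R = {v\<in>V. insert u (Nb u) \<inter> insert v (Nb v) \<noteq> {}}"
    have "(\<Sum>v\<in>V. \<Sum>X\<in>Pow Om. y X u * y X v) = (\<Sum>v\<in>R. \<Sum>X\<in>Pow Om. y X u * y X v)"
    proof (rule sym, rule sum.mono_neutral_left)
      show "finite V" by (rule finV)
      show "R \<subseteq> V" unfolding R_def by blast
      show "\<forall>i\<in>V - R. (\<Sum>X\<in>Pow Om. y X u * y X i) = 0"
        unfolding R_def using Z2 by blast
    qed
    also have "\<dots> \<le> (\<Sum>v\<in>R. 2 ^ card Om)" by (rule sum_mono) (rule yy_le)
    also have "\<dots> = real (card R) * 2 ^ card Om" by simp
    also have "\<dots> \<le> (real d * real d + real d + 1) * 2 ^ card Om"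
    proof -
      have "card R \<le> d * d + d + 1" unfolding R_def using R_card[OF u] .
      then have "real (card R) \<le> real d * real d + real d + 1" by (metis of_nat_add of_nat_le_iff of_nat_mult of_nat_1)
      then show ?thesis by (rule mult_right_mono) simp
    qed
    finally show "(\<Sum>v\<in>V. \<Sum>X\<in>Pow Om. y X u * y X v) \<le> 2 ^ card Om * (real d * real d + real d + 1)"
      by (simp add: mult.commute)
  qed
  also have "\<dots> = 2 ^ card Om * (real n * (real d * real d + real d + 1))" using cardV by simp
  finally show ?thesis .
qed

definition Qf where "Qf X = (\<Sum>u\<in>V. \<Sum>v\<in>V. (adj E u v - real d / real n) * (y X u * y X v))"

lemma main_sum: "(\<Sum>X\<in>Pow Om. Qf X) \<ge> 2 ^ card Om * (real n * DD - real d * (real d * real d + real d + 1))"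
proof -
  have e: "(\<Sum>X\<in>Pow Om. Qf X) = (\<Sum>X\<in>Pow Om. \<Sum>u\<in>V. \<Sum>v\<in>V. adj E u v * (y X u * y X v))
     - (real d / real n) * (\<Sum>X\<in>Pow Om. \<Sum>u\<in>V. \<Sum>v\<in>V. y X u * y X v)"
    unfolding Qf_def by (simp add: left_diff_distrib sum_subtractf sum_distrib_left)
  have dn: "real d / real n \<ge> 0" by simp
  have "(real d / real n) * (\<Sum>X\<in>Pow Om. \<Sum>u\<in>V. \<Sum>v\<in>V. y X u * y X v)
       \<le> (real d / real n) * (2 ^ card Om * (real n * (real d * real d + real d + 1)))"
    using yy_part dn by (rule mult_left_mono)
  also have "\<dots> = 2 ^ card Om * (real d * (real d * real d + real d + 1))" using n_pos by simp
  finally have "(real d / real n) * (\<Sum>X\<in>Pow Om. \<Sum>u\<in>V. \<Sum>v\<in>V. y X u * y X v) \<le> 2 ^ card Om * (real d * (real d * real d + real d + 1))" .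
  then show ?thesis using e adj_part by (simp add: right_diff_distrib)
qed

lemma exists_good: "\<exists>X. Qf X \<ge> real n * DD - real d * (real d * real d + real d + 1)"
proof (rule ccontr)
  assume "\<not> ?thesis"
  then have lt: "Qf X < real n * DD - real d * (real d * real d + real d + 1)" for X by (meson not_le)
  have "(\<Sum>X\<in>Pow Om. Qf X) < (\<Sum>X\<in>Pow Om. real n * DD - real d * (real d * real d + real d + 1))"
    using finOm lt by (intro sum_strict_mono) auto
  also have "\<dots> = 2 ^ card Om * (real n * DD - real d * (real d * real d + real d + 1))"
    using K_def' by simp
  finally show False using main_sum by linarith
qed

end


context RG begin

lemma cm_empty: "cluster_modularity V E {} = 0" by (simp add: cluster_modularity_def)

lemma bip:
  assumes A: "A \<subseteq> V"
  shows "\<exists>S. is_clustering V S \<and> modularity V E S = cluster_modularity V E A + cluster_modularity V E (V - A)"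
proof (cases "A = {} \<or> A = V")
  case True
  have c: "is_clustering V {V}" using ne by (simp add: is_clustering_def)
  have "modularity V E {V} = cluster_modularity V E A + cluster_modularity V E (V - A)"
    using True by (auto simp: modularity_def cm_empty)
  then show ?thesis using c by blast
next
  case False
  then have A0: "A \<noteq> {}" and AV: "A \<noteq> V" by auto
  have B0: "V - A \<noteq> {}" using A AV by blast
  have AB: "A \<noteq> V - A" using A0 by blast
  have c: "is_clustering V {A, V - A}" using A A0 B0 by (auto simp: is_clustering_def)
  have "modularity V E {A, V - A} = cluster_modularity V E A + cluster_modularity V E (V - A)"
    using AB by (simp add: modularity_def)
  then show ?thesis using c by blast
qed

lemma F_row0: "u \<in> V \<Longrightarrow> (\<Sum>v\<in>V. adj E u v - real d / real n) = 0"
  using sum_adj_d cardV n_pos by (simp add: sum_subtractf)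

lemma cm_pair:
  assumes A: "A \<subseteq> V"
  shows "cluster_modularity V E A + cluster_modularity V E (V - A) =
    (\<Sum>u\<in>V. \<Sum>v\<in>V. (adj E u v - real d / real n) * ((if u \<in> A then 1 else -1) * (if v \<in> A then 1 else -1)))
      / (2 * real d * real n)"
proof -
  define F where "F u v = adj E u v - real d / real n" for u v
  define B where "B = V - A"
  have finA: "finite A" using A finV finite_subset by blast
  have finB: "finite B" using finV B_def by simp
  have VAB: "V = A \<union> B" "A \<inter> B = {}" using A B_def by auto
  have s0: "(\<Sum>u\<in>V. \<Sum>v\<in>V. F u v) = 0" unfolding F_def using F_row0 by simp
  have same: "(\<Sum>u\<in>V. \<Sum>v\<in>V. if (u \<in> A) = (v \<in> A) then F u v else 0) =
      (\<Sum>u\<in>A. \<Sum>v\<in>A. F u v) + (\<Sum>u\<in>B. \<Sum>v\<in>B. F u v)"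
  proof -
    have "(\<Sum>u\<in>V. \<Sum>v\<in>V. if (u \<in> A) = (v \<in> A) then F u v else 0) =
      (\<Sum>u\<in>A. \<Sum>v\<in>V. if (u \<in> A) = (v \<in> A) then F u v else 0) + (\<Sum>u\<in>B. \<Sum>v\<in>V. if (u \<in> A) = (v \<in> A) then F u v else 0)"
      unfolding VAB(1) using finA finB VAB(2) by (rule sum.union_disjoint)
    also have "(\<Sum>u\<in>A. \<Sum>v\<in>V. if (u \<in> A) = (v \<in> A) then F u v else 0) = (\<Sum>u\<in>A. \<Sum>v\<in>A. F u v)"
    proof (rule sum.cong)
      fix u assume "u \<in> A"
      then have "(\<Sum>v\<in>V. if (u \<in> A) = (v \<in> A) then F u v else 0) = (\<Sum>v\<in>V. if v \<in> A then F u v else 0)" by simp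
      also have "\<dots> = (\<Sum>v\<in>V \<inter> A. F u v)" using finV by (simp add: sum.If_cases)
      also have "V \<inter> A = A" using A by blast
      finally show "(\<Sum>v\<in>V. if (u \<in> A) = (v \<in> A) then F u v else 0) = (\<Sum>v\<in>A. F u v)" .
    qed simp
    also have "(\<Sum>u\<in>B. \<Sum>v\<in>V. if (u \<in> A) = (v \<in> A) then F u v else 0) = (\<Sum>u\<in>B. \<Sum>v\<in>B. F u v)"
    proof (rule sum.cong)
      fix u assume "u \<in> B"
      then have "u \<notin> A" using B_def by simp
      then have "(\<Sum>v\<in>V. if (u \<in> A) = (v \<in> A) then F u v else 0) = (\<Sum>v\<in>V. if v \<in> B then F u v else 0)"
        using B_def by (intro sum.cong) auto
      also have "\<dots> = (\<Sum>v\<in>V \<inter> B. F u v)" using finV by (simp add: sum.If_cases)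
      also have "V \<inter> B = B" using B_def by blast
      finally show "(\<Sum>v\<in>V. if (u \<in> A) = (v \<in> A) then F u v else 0) = (\<Sum>v\<in>B. F u v)" .
    qed simp
    finally show ?thesis .
  qed
  have "(\<Sum>u\<in>V. \<Sum>v\<in>V. F u v * ((if u \<in> A then 1 else -1) * (if v \<in> A then 1 else -1))) =
        (\<Sum>u\<in>V. \<Sum>v\<in>V. 2 * (if (u \<in> A) = (v \<in> A) then F u v else 0) - F u v)"
    by (intro sum.cong) auto
  also have "\<dots> = 2 * (\<Sum>u\<in>V. \<Sum>v\<in>V. if (u \<in> A) = (v \<in> A) then F u v else 0) - (\<Sum>u\<in>V. \<Sum>v\<in>V. F u v)"
    by (simp add: sum_subtractf sum_distrib_left)
  finally have tot: "(\<Sum>u\<in>V. \<Sum>v\<in>V. F u v * ((if u \<in> A then 1 else -1) * (if v \<in> A then 1 else -1))) =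
      2 * ((\<Sum>u\<in>A. \<Sum>v\<in>A. F u v) + (\<Sum>u\<in>B. \<Sum>v\<in>B. F u v))" using s0 same by simp
  have "cluster_modularity V E A + cluster_modularity V E (V - A) = ((\<Sum>u\<in>A. \<Sum>v\<in>A. F u v) + (\<Sum>u\<in>B. \<Sum>v\<in>B. F u v)) / (real d * real n)"
    using cm_formula[OF A] cm_formula[of B] B_def unfolding F_def by (simp add: add_divide_distrib)
  also have "\<dots> = (\<Sum>u\<in>V. \<Sum>v\<in>V. F u v * ((if u \<in> A then 1 else -1) * (if v \<in> A then 1 else -1))) / (2 * real d * real n)"
  proof -
    have h2: "(2 * x) / (2 * real d * real n) = x / (real d * real n)" for x by simp
    show ?thesis unfolding tot by (rule sym, rule h2)
  qed
  finally show ?thesis unfolding F_def .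
qed

lemma part2:
  assumes big: "real n > 40 * real d ^ 9"
  shows "OPT V E > 0.26 / sqrt (real d)"
proof -
  obtain X where X: "Qf X \<ge> real n * DD - real d * (real d * real d + real d + 1)" using exists_good by blast
  define A where "A = {u\<in>V. y X u = 1}"
  have A: "A \<subseteq> V" unfolding A_def by blast
  have yA: "y X u = (if u \<in> A then 1 else -1)" if "u \<in> V" for u using y_pm[of X u] that A_def by auto
  have Q: "Qf X = (\<Sum>u\<in>V. \<Sum>v\<in>V. (adj E u v - real d / real n) * ((if u \<in> A then 1 else -1) * (if v \<in> A then 1 else -1)))"
    unfolding Qf_def using yA by (intro sum.cong) auto
  obtain S where S: "is_clustering V S" "modularity V E S = cluster_modularity V E A + cluster_modularity V E (V - A)"
    using bip[OF A] by blast
  have opt: "OPT V E \<ge> Qf X / (2 * real d * real n)"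
    using OPT_ge[OF S(1)] S(2) cm_pair[OF A] Q by simp
  have d3r: "real d \<ge> 3" using d3 by simp
  have sq1: "sqrt (real d) \<ge> 1" using d3r by simp
  have DDb: "DD \<ge> (27/50) * sqrt (real d)" unfolding DD_def using Dbound[OF d3] .
  have n0: "real n > 0" using n_pos by simp
  have "real n * DD \<ge> real n * ((27/50) * sqrt (real d))" using DDb n0 by (intro mult_left_mono) auto
  have p6: "real d ^ 6 \<ge> 729" using power_mono[OF d3r, of 6] by simp
  have cub: "real d * (real d * real d + real d + 1) \<le> 3 * real d ^ 3"
  proof -
    have "real d * real d \<ge> 3 * real d" using d3r by (intro mult_right_mono) auto
    then have "real d * real d + real d + 1 \<le> 3 * (real d * real d)" using d3r by linarith
    then have "real d * (real d * real d + real d + 1) \<le> real d * (3 * (real d * real d))" using d3r by (intro mult_left_mono) auto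
    then show ?thesis by (simp add: power3_eq_cube algebra_simps)
  qed
  have "3 * real d ^ 3 \<le> real d ^ 3 * real d ^ 6 / 50"
  proof -
    have "real d ^ 3 * 150 \<le> real d ^ 3 * real d ^ 6" using p6 by (intro mult_left_mono) auto
    then show ?thesis by simp
  qed
  also have "real d ^ 3 * real d ^ 6 = real d ^ 9" by (simp add: power_add[symmetric])
  finally have "3 * real d ^ 3 \<le> real d ^ 9 / 50" .
  also have "real d ^ 9 / 50 < real n / 50 / 40" using big by simp
  also have "\<dots> \<le> real n * sqrt (real d) / 50"
  proof -
    have "real n * 1 \<le> real n * sqrt (real d)" using sq1 n0 by (intro mult_left_mono) auto
    then have "real n / 50 \<le> real n * sqrt (real d) / 50" by (simp add: divide_right_mono)
    moreover have "real n / 50 / 40 \<le> real n / 50" using n0 by simp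
    ultimately show ?thesis by linarith
  qed
  finally have small: "real d * (real d * real d + real d + 1) < real n * sqrt (real d) / 50" using cub by linarith
  have "Qf X > real n * ((27/50) * sqrt (real d)) - real n * sqrt (real d) / 50"
    using X \<open>real n * DD \<ge> real n * ((27/50) * sqrt (real d))\<close> small by linarith
  then have QX: "Qf X > 0.52 * sqrt (real d) * real n" by (simp add: algebra_simps)
  have dn: "2 * real d * real n > 0" using d_pos n0 by simp
  have "0.26 / sqrt (real d) = 0.52 * sqrt (real d) * real n / (2 * real d * real n)"
  proof -
    have sd: "sqrt (real d) * sqrt (real d) = real d" using d3r by simp
    have "0.52 * sqrt (real d) * real n / (2 * real d * real n) = 0.26 * sqrt (real d) / real d"
      using n0 by simp
    also have "\<dots> = 0.26 * sqrt (real d) / (sqrt (real d) * sqrt (real d))" by (simp only: sd)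
    also have "\<dots> = 0.26 / sqrt (real d)"
    proof -
      have g: "(0.26 * t) / (t * t) = 0.26 / t" if "t > 0" for t :: real using that by simp
      show ?thesis by (rule g) (use sq1 in simp)
    qed
    finally show ?thesis by simp
  qed
  also have "\<dots> < Qf X / (2 * real d * real n)" using QX dn by (rule divide_strict_right_mono)
  finally show ?thesis using opt by linarith
qed

end

theorem lemma9:
  fixes V :: "'a set" and E :: "'a \<Rightarrow> 'a \<Rightarrow> bool" and d n :: nat
  assumes "simple_graph V E"
    and "regular V E d"
    and "V \<noteq> {}"
    and "d \<ge> 3"
    and "card V = n"
  shows "OPT V E > 0.86 / real d - 4 / real n \<and>
         (real n > 40 * real d ^ 9 \<longrightarrow> OPT V E > 0.26 / sqrt (real d))"
proof -
  interpret RG V E d n using assms by (unfold_locales) auto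
  have p: "1 / real d > 0" using d_pos by simp
  have e: "0.86 / real d = (43/50) * (1 / real d)" by simp
  have "1 / real d > 0.86 / real d" unfolding e using p by linarith
  then have "OPT V E > 0.86 / real d - 4 / real n" using part1 by linarith
  moreover have "real n > 40 * real d ^ 9 \<longrightarrow> OPT V E > 0.26 / sqrt (real d)" using part2 by blast
  ultimately show ?thesis by blast
qed

end
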